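(* Let $\kappa$ be a regular uncountable cardinal with $\kappa^{<\kappa}=\kappa$ and $\gamma^\omega<\kappa$ for all $\gamma<\kappa$, and let $I^i$, $I^i_\alpha$ be as in the context. For every $i<\kappa$, every limit ordinal $\delta<\kappa$ and every $\nu\in I^i$ with $\nu\notin I^i_\delta$, there is $\beta<\delta$ such that for every $\sigma\in I^i_\delta$ with $\sigma>\nu$ there is $\sigma'\in I^0_\beta$ with $\sigma>\sigma'>\nu$.
   Context: $I^0$: order $\kappa\times\mathbb Q$ lexicographically; $I^0$ is the set of $f:\omega\to\kappa\times\mathbb Q$, $f(n)=(f_1(n),f_2(n))$, with $\{n\mid f_1(n)\ne0\}$ finite, ordered by comparing at the least $n$ where they differ. Construct linear orders $I^0\subseteq I^1\subseteq\dots$ ($i<\kappa$): given $I^i$, for each $\nu\in I^i$ add a new element $\nu^{i+1}$ with $\nu^{i+1}<\nu$ and, for every $\tau\in I^i\setminus\{\nu\}$, $\tau<\nu^{i+1}$ iff $\tau<\nu$ (for distinct $\nu,\mu$, $\nu^{i+1}<\mu^{i+1}$ iff $\nu<\mu$); $I^{i+1}=I^i\cup\{\nu^{i+1}\mid\nu\in I^i\}$; at limits take unions. Representations: $I^0_\alpha=\{\nu\in I^0\mid\nu_1(n)<\alpha\ \forall n\}$; $I^{i+1}_\alpha=I^i_\alpha\cup\{\nu^{i+1}\mid\nu\in I^i_\alpha\}$; for limit $i$, $I^i_\alpha=\bigcup_{j<i}I^j_\alpha$. *)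

theory Defs
  imports Complex_Main
begin

text \<open>The cardinal kappa is represented by a cardinal order k on a type 'k
(card_order: a well-order on all of 'k which is minimal among well-orders of
the same cardinality); the elements of 'k are thus the ordinals below kappa.\<close>

definition kless :: "'k rel \<Rightarrow> 'k \<Rightarrow> 'k \<Rightarrow> bool" where
  "kless k a b \<longleftrightarrow> (a, b) \<in> k \<and> a \<noteq> b"

definition kzero :: "'k rel \<Rightarrow> 'k" where
  "kzero k = (THE z. \<forall>x. (z, x) \<in> k)"

definition ksucc_of :: "'k rel \<Rightarrow> 'k \<Rightarrow> 'k \<Rightarrow> bool" where
  "ksucc_of k j i \<longleftrightarrow> kless k j i \<and> (\<forall>x. kless k j x \<longrightarrow> (i, x) \<in> k)"

definition klimit :: "'k rel \<Rightarrow> 'k \<Rightarrow> bool" where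
  "klimit k d \<longleftrightarrow> d \<noteq> kzero k \<and> \<not> (\<exists>j. ksucc_of k j d)"

definition I0 :: "'k rel \<Rightarrow> (nat \<Rightarrow> 'k \<times> rat) set" where
  "I0 k = {f. finite {n. fst (f n) \<noteq> kzero k}}"

definition lexKQ :: "'k rel \<Rightarrow> 'k \<times> rat \<Rightarrow> 'k \<times> rat \<Rightarrow> bool" where
  "lexKQ k p q \<longleftrightarrow> kless k (fst p) (fst q) \<or> (fst p = fst q \<and> snd p < snd q)"

definition lessI0 :: "'k rel \<Rightarrow> (nat \<Rightarrow> 'k \<times> rat) \<Rightarrow> (nat \<Rightarrow> 'k \<times> rat) \<Rightarrow> bool" where
  "lessI0 k f g \<longleftrightarrow> (\<exists>n. (\<forall>m<n. f m = g m) \<and> lexKQ k (f n) (g n))"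

definition I0_rep :: "'k rel \<Rightarrow> 'k \<Rightarrow> (nat \<Rightarrow> 'k \<times> rat) set" where
  "I0_rep k \<alpha> = {f \<in> I0 k. \<forall>n. kless k (fst (f n)) \<alpha>}"

text \<open>Ambient carrier of all I^i. An element of I^0 is encoded as (f, []).
The new element nu^(j+1) added at the successor stage j+1 is the formal
symbol (fst nu, snd nu @ [j]); it is new, i.e. not in I^j, and distinct nu
give distinct nu^(j+1).\<close>
type_synonym 'k elt = "(nat \<Rightarrow> 'k \<times> rat) \<times> 'k list"

definition hat :: "'k \<Rightarrow> 'k elt \<Rightarrow> 'k elt" where
  "hat j \<nu> = (fst \<nu>, snd \<nu> @ [j])"

text \<open>One step of the transfinite recursion. A stage is the triple
(I^i, strict order on I^i, alpha \<mapsto> I^i_alpha).\<close>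
definition stage_step ::
  "'k rel \<Rightarrow> ('k \<Rightarrow> 'k elt set \<times> 'k elt rel \<times> ('k \<Rightarrow> 'k elt set)) \<Rightarrow> 'k
     \<Rightarrow> 'k elt set \<times> 'k elt rel \<times> ('k \<Rightarrow> 'k elt set)" where
  "stage_step k g i =
    (if i = kzero k then
       ((\<lambda>f. (f, [])) ` I0 k,
        {((f, []), (f', [])) | f f'. f \<in> I0 k \<and> f' \<in> I0 k \<and> lessI0 k f f'},
        (\<lambda>\<alpha>. (\<lambda>f. (f, [])) ` I0_rep k \<alpha>))
     else if (\<exists>j. ksucc_of k j i) then
       (let j = (THE j. ksucc_of k j i); A = fst (g j); R = fst (snd (g j));
            Rep = snd (snd (g j)) in
        (A \<union> hat j ` A,
         R \<union> {(hat j \<nu>, \<nu>) | \<nu>. \<nu> \<in> A}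
           \<union> {(\<tau>, hat j \<nu>) | \<tau> \<nu>. \<nu> \<in> A \<and> \<tau> \<in> A \<and> \<tau> \<noteq> \<nu> \<and> (\<tau>, \<nu>) \<in> R}
           \<union> {(hat j \<nu>, \<tau>) | \<tau> \<nu>. \<nu> \<in> A \<and> \<tau> \<in> A \<and> \<tau> \<noteq> \<nu> \<and> (\<nu>, \<tau>) \<in> R}
           \<union> {(hat j \<nu>, hat j \<mu>) | \<nu> \<mu>. \<nu> \<in> A \<and> \<mu> \<in> A \<and> \<nu> \<noteq> \<mu> \<and> (\<nu>, \<mu>) \<in> R},
         (\<lambda>\<alpha>. Rep \<alpha> \<union> hat j ` Rep \<alpha>)))
     else
       ((\<Union>j\<in>{j. kless k j i}. fst (g j)),
        (\<Union>j\<in>{j. kless k j i}. fst (snd (g j))),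
        (\<lambda>\<alpha>. \<Union>j\<in>{j. kless k j i}. snd (snd (g j)) \<alpha>)))"

definition stage :: "'k rel \<Rightarrow> 'k \<Rightarrow> 'k elt set \<times> 'k elt rel \<times> ('k \<Rightarrow> 'k elt set)" where
  "stage k = wfrec {(a, b). kless k a b} (stage_step k)"

definition Iset :: "'k rel \<Rightarrow> 'k \<Rightarrow> 'k elt set" where
  "Iset k i = fst (stage k i)"

text \<open>strict order of I^i: (x, y) \<in> Iless k i means x < y\<close>
definition Iless :: "'k rel \<Rightarrow> 'k \<Rightarrow> 'k elt rel" where
  "Iless k i = fst (snd (stage k i))"

definition Irep :: "'k rel \<Rightarrow> 'k \<Rightarrow> 'k \<Rightarrow> 'k elt set" where
  "Irep k i \<alpha> = snd (snd (stage k i)) \<alpha>"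

end

theory Submission
  imports Defs
begin

locale kord =
  fixes k :: "'k rel"
  assumes co: "card_order k"
begin

lemma wo: "well_order_on UNIV k"
  using co card_order_on_well_order_on by blast

lemma krefl: "(x,x) \<in> k"
  using wo unfolding well_order_on_def linear_order_on_def partial_order_on_def preorder_on_def
    refl_on_def by blast

lemma ktotal: "(x,y) \<in> k \<or> (y,x) \<in> k"
proof (cases "x = y")
  case True then show ?thesis using krefl by simp
next
  case False then show ?thesis
    using wo unfolding well_order_on_def linear_order_on_def total_on_def by blast
qed

lemma kantisym: "(x,y) \<in> k \<Longrightarrow> (y,x) \<in> k \<Longrightarrow> x = y"
  using wo unfolding well_order_on_def linear_order_on_def partial_order_on_def antisym_def
  by blast

lemma ktrans: "(x,y) \<in> k \<Longrightarrow> (y,z) \<in> k \<Longrightarrow> (x,z) \<in> k"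
  using wo unfolding well_order_on_def linear_order_on_def partial_order_on_def preorder_on_def
    trans_def by blast

lemma kwf: "wf (k - Id)"
  using wo unfolding well_order_on_def by blast

lemma R_eq: "{(a, b). kless k a b} = k - Id"
  unfolding kless_def by auto

lemma Rwf: "wf {(a, b). kless k a b}"
  using kwf R_eq by simp

lemma kless_irrefl: "\<not> kless k x x" unfolding kless_def by simp

lemma kless_trans: "kless k x y \<Longrightarrow> kless k y z \<Longrightarrow> kless k x z"
  unfolding kless_def using ktrans kantisym by blast

lemma kless_total: "kless k x y \<or> x = y \<or> kless k y x"
  unfolding kless_def using ktotal by blast

lemma kless_le_trans: "kless k x y \<Longrightarrow> (y,z) \<in> k \<Longrightarrow> kless k x z"
  unfolding kless_def using ktrans kantisym by blast

lemma kzero_min: "(kzero k, x) \<in> k"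
proof -
  obtain z where z: "z \<in> UNIV" "\<And>y. (y, z) \<in> k - Id \<Longrightarrow> y \<notin> UNIV"
    using wfE_min[OF kwf, of z UNIV] by blast
  have all: "\<forall>x. (z, x) \<in> k"
  proof
    fix x show "(z,x) \<in> k" using z(2)[of x] ktotal[of z x] by auto
  qed
  have "kzero k = z"
    unfolding kzero_def
  proof (rule the_equality)
    show "\<forall>x. (z, x) \<in> k" by (rule all)
    fix w assume "\<forall>x. (w, x) \<in> k"
    then show "w = z" using all kantisym by blast
  qed
  then show ?thesis using all by simp
qed

lemma succ_unique: "ksucc_of k j i \<Longrightarrow> ksucc_of k j' i \<Longrightarrow> j = j'"
proof (rule ccontr)
  assume a: "ksucc_of k j i" "ksucc_of k j' i" "j \<noteq> j'"
  have "kless k j j' \<or> kless k j' j" using a(3) kless_total by blast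
  then show False
  proof
    assume "kless k j j'"
    then have "(i, j') \<in> k" using a(1) unfolding ksucc_of_def by blast
    moreover have "(j', i) \<in> k" "j' \<noteq> i" using a(2) unfolding ksucc_of_def kless_def by blast+
    ultimately show False using kantisym by blast
  next
    assume "kless k j' j"
    then have "(i, j) \<in> k" using a(2) unfolding ksucc_of_def by blast
    moreover have "(j, i) \<in> k" "j \<noteq> i" using a(1) unfolding ksucc_of_def kless_def by blast+
    ultimately show False using kantisym by blast
  qed
qed

lemma succ_the: "ksucc_of k j i \<Longrightarrow> (THE j. ksucc_of k j i) = j"
  using succ_unique by blast

lemma lexKQ_irrefl: "\<not> lexKQ k p p"
  unfolding lexKQ_def using kless_irrefl by simp

lemma lessI0_irrefl: "\<not> lessI0 k f f"
  unfolding lessI0_def using lexKQ_irrefl by blast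

lemma step_cong:
  assumes "\<And>j. kless k j i \<Longrightarrow> g j = g' j"
  shows "stage_step k g i = stage_step k g' i"
proof -
  consider (z) "i = kzero k" | (s) "i \<noteq> kzero k" "\<exists>j. ksucc_of k j i"
    | (l) "i \<noteq> kzero k" "\<not> (\<exists>j. ksucc_of k j i)" by blast
  then show ?thesis
  proof cases
    case z then show ?thesis unfolding stage_step_def by simp
  next
    case s
    then obtain j where j: "ksucc_of k j i" by blast
    then have "kless k j i" unfolding ksucc_of_def by blast
    then have "g j = g' j" using assms by blast
    then show ?thesis using s j unfolding stage_step_def succ_the[OF j] by simp
  next
    case l
    have e: "\<And>j. j \<in> {j. kless k j i} \<Longrightarrow> g j = g' j" using assms by blast
    have h: "\<And>h. (\<Union>j\<in>{j. kless k j i}. h (g j)) = (\<Union>j\<in>{j. kless k j i}. h (g' j))"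
      using e by (intro SUP_cong) auto
    have h3: "(\<lambda>\<alpha>. \<Union>j\<in>{j. kless k j i}. snd (snd (g j)) \<alpha>) =
       (\<lambda>\<alpha>. \<Union>j\<in>{j. kless k j i}. snd (snd (g' j)) \<alpha>)"
    proof
      fix \<alpha> show "(\<Union>j\<in>{j. kless k j i}. snd (snd (g j)) \<alpha>) =
       (\<Union>j\<in>{j. kless k j i}. snd (snd (g' j)) \<alpha>)"
        using h[of "\<lambda>x. snd (snd x) \<alpha>"] by simp
    qed
    show ?thesis using l h[of fst] h[of "\<lambda>x. fst (snd x)"] h3 unfolding stage_step_def
      by simp
  qed
qed

lemma stage_unfold: "stage k i = stage_step k (stage k) i"
proof -
  have "stage k i = stage_step k (cut (stage k) {(a, b). kless k a b} i) i"
    unfolding stage_def by (rule wfrec[OF Rwf])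
  also have "\<dots> = stage_step k (stage k) i"
    by (rule step_cong) (simp add: cut_apply)
  finally show ?thesis .
qed

definition Inv :: "'k \<Rightarrow> bool" where
  "Inv i \<longleftrightarrow>
    (\<forall>x \<in> Iset k i. fst x \<in> I0 k) \<and>
    (\<forall>f \<in> I0 k. (f, []) \<in> Iset k i) \<and>
    (\<forall>x y. (x,y) \<in> Iless k i \<longrightarrow> x \<in> Iset k i \<and> y \<in> Iset k i \<and>
        (fst x \<noteq> fst y \<longrightarrow> lessI0 k (fst x) (fst y))) \<and>
    (\<forall>x \<in> Iset k i. \<forall>f \<in> I0 k. (lessI0 k f (fst x) \<longrightarrow> ((f, []), x) \<in> Iless k i) \<and>
        (lessI0 k (fst x) f \<longrightarrow> (x, (f, [])) \<in> Iless k i)) \<and>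
    (\<forall>\<alpha>. Irep k i \<alpha> = {x \<in> Iset k i. fst x \<in> I0_rep k \<alpha>})"

lemma Inv_all: "Inv i"
proof (induction i rule: wf_induct_rule[OF Rwf])
  case (1 i)
  have IH: "\<And>j. kless k j i \<Longrightarrow> Inv j" using 1 by blast
  consider (z) "i = kzero k" | (s) "i \<noteq> kzero k" "\<exists>j. ksucc_of k j i"
    | (l) "i \<noteq> kzero k" "\<not> (\<exists>j. ksucc_of k j i)" by blast
  then show ?case
  proof cases
    case z
    have st: "stage k i = ((\<lambda>f. (f, [])) ` I0 k,
        {((f, []), (f', [])) | f f'. f \<in> I0 k \<and> f' \<in> I0 k \<and> lessI0 k f f'},
        (\<lambda>\<alpha>. (\<lambda>f. (f, [])) ` I0_rep k \<alpha>))"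
      using z stage_unfold[of i] unfolding stage_step_def by simp
    show ?thesis unfolding Inv_def Iset_def Iless_def Irep_def st
      by (auto simp: I0_rep_def)
  next
    case s
    then obtain j where j: "ksucc_of k j i" by blast
    then have jl: "kless k j i" unfolding ksucc_of_def by blast
    have Ij: "Inv j" using IH jl .
    define A where "A = Iset k j"
    define R where "R = Iless k j"
    define Rep where "Rep = Irep k j"
    have st: "stage k i = (A \<union> hat j ` A,
         R \<union> {(hat j \<nu>, \<nu>) | \<nu>. \<nu> \<in> A}
           \<union> {(\<tau>, hat j \<nu>) | \<tau> \<nu>. \<nu> \<in> A \<and> \<tau> \<in> A \<and> \<tau> \<noteq> \<nu> \<and> (\<tau>, \<nu>) \<in> R}
           \<union> {(hat j \<nu>, \<tau>) | \<tau> \<nu>. \<nu> \<in> A \<and> \<tau> \<in> A \<and> \<tau> \<noteq> \<nu> \<and> (\<nu>, \<tau>) \<in> R}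
           \<union> {(hat j \<nu>, hat j \<mu>) | \<nu> \<mu>. \<nu> \<in> A \<and> \<mu> \<in> A \<and> \<nu> \<noteq> \<mu> \<and> (\<nu>, \<mu>) \<in> R},
         (\<lambda>\<alpha>. Rep \<alpha> \<union> hat j ` Rep \<alpha>))"
      using s stage_unfold[of i] unfolding stage_step_def succ_the[OF j] A_def R_def Rep_def
        Iset_def Iless_def Irep_def by (simp add: Let_def)
    have fh: "fst (hat j x) = fst x" for x by (simp add: hat_def)
    have a1: "\<forall>x \<in> A. fst x \<in> I0 k" using Ij unfolding Inv_def A_def by blast
    have a2: "\<forall>f \<in> I0 k. (f, []) \<in> A" using Ij unfolding Inv_def A_def by blast
    have a3: "\<forall>x y. (x,y) \<in> R \<longrightarrow> x \<in> A \<and> y \<in> A \<and>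
        (fst x \<noteq> fst y \<longrightarrow> lessI0 k (fst x) (fst y))"
      using Ij unfolding Inv_def A_def R_def by blast
    have a4: "\<forall>x \<in> A. \<forall>f \<in> I0 k. (lessI0 k f (fst x) \<longrightarrow> ((f, []), x) \<in> R) \<and>
        (lessI0 k (fst x) f \<longrightarrow> (x, (f, [])) \<in> R)"
      using Ij unfolding Inv_def A_def R_def by blast
    have a5: "\<forall>\<alpha>. Rep \<alpha> = {x \<in> A. fst x \<in> I0_rep k \<alpha>}"
      using Ij unfolding Inv_def A_def Rep_def by blast
    have b1: "\<forall>x \<in> Iset k i. fst x \<in> I0 k"
      unfolding Iset_def st using a1 fh by auto
    have b2: "\<forall>f \<in> I0 k. (f, []) \<in> Iset k i"
      unfolding Iset_def st using a2 by auto
    have b3: "\<forall>x y. (x,y) \<in> Iless k i \<longrightarrow> x \<in> Iset k i \<and> y \<in> Iset k i \<and>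
        (fst x \<noteq> fst y \<longrightarrow> lessI0 k (fst x) (fst y))"
    proof (intro allI impI)
      fix x y assume xy: "(x,y) \<in> Iless k i"
      have "(x,y) \<in> R \<or> (\<exists>\<nu>. \<nu>\<in>A \<and> x = hat j \<nu> \<and> y = \<nu>)
        \<or> (\<exists>\<tau> \<nu>. \<nu>\<in>A \<and> \<tau>\<in>A \<and> \<tau>\<noteq>\<nu> \<and> (\<tau>,\<nu>)\<in>R \<and> x = \<tau> \<and> y = hat j \<nu>)
        \<or> (\<exists>\<tau> \<nu>. \<nu>\<in>A \<and> \<tau>\<in>A \<and> \<tau>\<noteq>\<nu> \<and> (\<nu>,\<tau>)\<in>R \<and> x = hat j \<nu> \<and> y = \<tau>)
        \<or> (\<exists>\<nu> \<mu>. \<nu>\<in>A \<and> \<mu>\<in>A \<and> \<nu>\<noteq>\<mu> \<and> (\<nu>,\<mu>)\<in>R \<and> x = hat j \<nu> \<and> y = hat j \<mu>)"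
        using xy unfolding Iless_def st fst_conv snd_conv by blast
      then show "x \<in> Iset k i \<and> y \<in> Iset k i \<and>
        (fst x \<noteq> fst y \<longrightarrow> lessI0 k (fst x) (fst y))"
      proof (elim disjE exE conjE)
        assume "(x,y) \<in> R" then show ?thesis using a3 unfolding Iset_def st fst_conv by blast
      next
        fix \<nu> assume "\<nu>\<in>A" "x = hat j \<nu>" "y = \<nu>"
        then show ?thesis unfolding Iset_def st using fh by auto
      next
        fix \<tau> \<nu> assume h: "\<nu>\<in>A" "\<tau>\<in>A" "\<tau>\<noteq>\<nu>" "(\<tau>,\<nu>)\<in>R" "x = \<tau>" "y = hat j \<nu>"
        have "fst \<tau> \<noteq> fst \<nu> \<longrightarrow> lessI0 k (fst \<tau>) (fst \<nu>)" using a3 h(4) by blast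
        moreover have "x \<in> A \<union> hat j ` A" "y \<in> A \<union> hat j ` A" using h by auto
        ultimately show ?thesis unfolding Iset_def st fst_conv using h(5,6) fh by simp
      next
        fix \<tau> \<nu> assume h: "\<nu>\<in>A" "\<tau>\<in>A" "\<tau>\<noteq>\<nu>" "(\<nu>,\<tau>)\<in>R" "x = hat j \<nu>" "y = \<tau>"
        have "fst \<nu> \<noteq> fst \<tau> \<longrightarrow> lessI0 k (fst \<nu>) (fst \<tau>)" using a3 h(4) by blast
        moreover have "x \<in> A \<union> hat j ` A" "y \<in> A \<union> hat j ` A" using h by auto
        ultimately show ?thesis unfolding Iset_def st fst_conv using h(5,6) fh by simp
      next
        fix \<nu> \<mu> assume h: "\<nu>\<in>A" "\<mu>\<in>A" "\<nu>\<noteq>\<mu>" "(\<nu>,\<mu>)\<in>R" "x = hat j \<nu>" "y = hat j \<mu>"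
        have "fst \<nu> \<noteq> fst \<mu> \<longrightarrow> lessI0 k (fst \<nu>) (fst \<mu>)" using a3 h(4) by blast
        moreover have "x \<in> A \<union> hat j ` A" "y \<in> A \<union> hat j ` A" using h by auto
        ultimately show ?thesis unfolding Iset_def st fst_conv using h(5,6) fh by simp
      qed
    qed
    have b4: "\<forall>x \<in> Iset k i. \<forall>f \<in> I0 k. (lessI0 k f (fst x) \<longrightarrow> ((f, []), x) \<in> Iless k i) \<and>
        (lessI0 k (fst x) f \<longrightarrow> (x, (f, [])) \<in> Iless k i)"
    proof (intro ballI conjI impI)
      fix x f assume x: "x \<in> Iset k i" and f: "f \<in> I0 k"
      have fA: "(f, []) \<in> A" using a2 f by blast
      {
        assume lt: "lessI0 k f (fst x)"
        show "((f, []), x) \<in> Iless k i"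
        proof (cases "x \<in> A")
          case True then show ?thesis using a4 f lt unfolding Iless_def st by auto
        next
          case False
          then obtain \<nu> where \<nu>: "\<nu> \<in> A" "x = hat j \<nu>" using x unfolding Iset_def st by auto
          have "((f, []), \<nu>) \<in> R" using a4 f lt \<nu> fh by auto
          moreover have "(f, []) \<noteq> \<nu>" using lt \<nu> fh lessI0_irrefl by force
          ultimately show ?thesis using \<nu> fA unfolding Iless_def st fst_conv snd_conv by blast
        qed
      next
        assume lt: "lessI0 k (fst x) f"
        show "(x, (f, [])) \<in> Iless k i"
        proof (cases "x \<in> A")
          case True then show ?thesis using a4 f lt unfolding Iless_def st by auto
        next
          case False
          then obtain \<nu> where \<nu>: "\<nu> \<in> A" "x = hat j \<nu>" using x unfolding Iset_def st by auto
          have "(\<nu>, (f, [])) \<in> R" using a4 f lt \<nu> fh by auto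
          moreover have "(f, []) \<noteq> \<nu>" using lt \<nu> fh lessI0_irrefl by force
          ultimately show ?thesis using \<nu> fA unfolding Iless_def st fst_conv snd_conv by blast
        qed
      }
    qed
    have b5: "\<forall>\<alpha>. Irep k i \<alpha> = {x \<in> Iset k i. fst x \<in> I0_rep k \<alpha>}"
      unfolding Irep_def Iset_def st using a5 fh by auto
    show ?thesis unfolding Inv_def using b1 b2 b3 b4 b5 by blast
  next
    case l
    have st: "stage k i = ((\<Union>j\<in>{j. kless k j i}. Iset k j),
        (\<Union>j\<in>{j. kless k j i}. Iless k j),
        (\<lambda>\<alpha>. \<Union>j\<in>{j. kless k j i}. Irep k j \<alpha>))"
      using l stage_unfold[of i] unfolding stage_step_def Iset_def Iless_def Irep_def by simp
    have si: "Iset k i = (\<Union>j\<in>{j. kless k j i}. Iset k j)" using st unfolding Iset_def by simp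
    have sl: "Iless k i = (\<Union>j\<in>{j. kless k j i}. Iless k j)" using st unfolding Iless_def by simp
    have sr: "\<And>\<alpha>. Irep k i \<alpha> = (\<Union>j\<in>{j. kless k j i}. Irep k j \<alpha>)" using st unfolding Irep_def by simp
    have zl: "kless k (kzero k) i" using l kzero_min unfolding kless_def by metis
    have Ii: "\<And>j. kless k j i \<Longrightarrow> Inv j" using IH by blast
    have b1: "\<forall>x \<in> Iset k i. fst x \<in> I0 k"
      unfolding si using Ii unfolding Inv_def by auto
    have b2: "\<forall>f \<in> I0 k. (f, []) \<in> Iset k i"
      unfolding si using Ii[OF zl] zl unfolding Inv_def by auto
    have b3: "\<forall>x y. (x,y) \<in> Iless k i \<longrightarrow> x \<in> Iset k i \<and> y \<in> Iset k i \<and>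
        (fst x \<noteq> fst y \<longrightarrow> lessI0 k (fst x) (fst y))"
    proof (intro allI impI)
      fix x y assume "(x,y) \<in> Iless k i"
      then obtain j where "kless k j i" "(x,y) \<in> Iless k j" unfolding sl by auto
      then have "x \<in> Iset k j \<and> y \<in> Iset k j \<and> (fst x \<noteq> fst y \<longrightarrow> lessI0 k (fst x) (fst y))"
        using Ii[of j] unfolding Inv_def by blast
      then show "x \<in> Iset k i \<and> y \<in> Iset k i \<and> (fst x \<noteq> fst y \<longrightarrow> lessI0 k (fst x) (fst y))"
        using \<open>kless k j i\<close> unfolding si by blast
    qed
    have b4: "\<forall>x \<in> Iset k i. \<forall>f \<in> I0 k. (lessI0 k f (fst x) \<longrightarrow> ((f, []), x) \<in> Iless k i) \<and>
        (lessI0 k (fst x) f \<longrightarrow> (x, (f, [])) \<in> Iless k i)"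
    proof (intro ballI)
      fix x f assume "x \<in> Iset k i" "f \<in> I0 k"
      moreover obtain j where "kless k j i" "x \<in> Iset k j" using \<open>x \<in> Iset k i\<close>
        unfolding si by auto
      ultimately show "(lessI0 k f (fst x) \<longrightarrow> ((f, []), x) \<in> Iless k i) \<and>
        (lessI0 k (fst x) f \<longrightarrow> (x, (f, [])) \<in> Iless k i)"
        using Ii[of j] unfolding Inv_def sl by blast
    qed
    have b5: "\<forall>\<alpha>. Irep k i \<alpha> = {x \<in> Iset k i. fst x \<in> I0_rep k \<alpha>}"
    proof
      fix \<alpha>
      have "Irep k i \<alpha> = (\<Union>j\<in>{j. kless k j i}. Irep k j \<alpha>)" unfolding sr by simp
      also have "\<dots> = (\<Union>j\<in>{j. kless k j i}. {x \<in> Iset k j. fst x \<in> I0_rep k \<alpha>})"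
        using Ii unfolding Inv_def by auto
      also have "\<dots> = {x \<in> Iset k i. fst x \<in> I0_rep k \<alpha>}" unfolding si by auto
      finally show "Irep k i \<alpha> = {x \<in> Iset k i. fst x \<in> I0_rep k \<alpha>}" .
    qed
    show ?thesis unfolding Inv_def using b1 b2 b3 b4 b5 by blast
  qed
qed

lemma above_finite:
  assumes "finite F" "\<forall>x\<in>F. kless k x \<delta>" "klimit k \<delta>"
  shows "\<exists>\<beta>. kless k \<beta> \<delta> \<and> (\<forall>x\<in>F. kless k x \<beta>)"
  using assms
proof (induction F rule: finite_induct)
  case empty
  have "kless k (kzero k) \<delta>" using empty(2) kzero_min unfolding klimit_def kless_def by metis
  then show ?case by blast
next
  case (insert x F)
  then obtain \<beta> where b: "kless k \<beta> \<delta>" "\<forall>y\<in>F. kless k y \<beta>" by auto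
  have xd: "kless k x \<delta>" using insert(4) by blast
  define M where "M = (if (x, \<beta>) \<in> k then \<beta> else x)"
  have Md: "kless k M \<delta>" using b xd unfolding M_def by simp
  have xM: "(x, M) \<in> k" "(\<beta>, M) \<in> k" using ktotal[of x \<beta>] krefl unfolding M_def by auto
  obtain z where z: "z \<in> {y. kless k M y}" "\<And>y. (y, z) \<in> k - Id \<Longrightarrow> y \<notin> {y. kless k M y}"
    using wfE_min[OF kwf, of \<delta> "{y. kless k M y}"] Md by blast
  have zmin: "\<forall>y. kless k M y \<longrightarrow> (z, y) \<in> k"
  proof (intro allI impI)
    fix y assume "kless k M y"
    then show "(z, y) \<in> k" using z(2)[of y] ktotal[of z y] krefl by (cases "y = z") auto
  qed
  have sz: "ksucc_of k M z" unfolding ksucc_of_def using z(1) zmin by simp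
  have "(z, \<delta>) \<in> k" using zmin Md by blast
  moreover have "z \<noteq> \<delta>" using sz insert(5) unfolding klimit_def by blast
  ultimately have zd: "kless k z \<delta>" unfolding kless_def by blast
  have Mz: "kless k M z" using z(1) by simp
  have "\<forall>y\<in>insert x F. kless k y z"
  proof
    fix y assume "y \<in> insert x F"
    then show "kless k y z"
    proof
      assume "y = x" then show ?thesis using xM(1) Mz kless_trans
        unfolding kless_def by (metis kantisym ktrans)
    next
      assume "y \<in> F" then have "kless k y \<beta>" using b by blast
      then show ?thesis using xM(2) Mz kless_le_trans kless_trans
        unfolding kless_def by (metis kantisym ktrans)
    qed
  qed
  then show ?case using zd by blast
qed

lemma I0_between:
  assumes lim: "klimit k \<delta>" and g: "g \<in> I0 k" "g \<notin> I0_rep k \<delta>"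
  shows "\<exists>\<beta>. kless k \<beta> \<delta> \<and> (\<forall>f \<in> I0_rep k \<delta>. lessI0 k g f \<longrightarrow>
     (\<exists>h \<in> I0_rep k \<beta>. lessI0 k g h \<and> lessI0 k h f))"
proof -
  have "\<exists>n. \<not> kless k (fst (g n)) \<delta>" using g unfolding I0_rep_def by blast
  define n0 where "n0 = (LEAST n. \<not> kless k (fst (g n)) \<delta>)"
  have n0: "\<not> kless k (fst (g n0)) \<delta>" unfolding n0_def
    using LeastI_ex[OF \<open>\<exists>n. \<not> kless k (fst (g n)) \<delta>\<close>] .
  have bel: "\<And>m. m < n0 \<Longrightarrow> kless k (fst (g m)) \<delta>" unfolding n0_def using not_less_Least by blast
  define F where "F = insert (kzero k) ((\<lambda>m. fst (g m)) ` {..<n0})"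
  have zd: "kless k (kzero k) \<delta>" using lim kzero_min unfolding klimit_def kless_def by metis
  have "finite F" unfolding F_def by simp
  moreover have "\<forall>x\<in>F. kless k x \<delta>" unfolding F_def using zd bel by auto
  ultimately obtain \<beta> where b: "kless k \<beta> \<delta>" "\<forall>x\<in>F. kless k x \<beta>"
    using above_finite lim by blast
  have zb: "kless k (kzero k) \<beta>" using b unfolding F_def by simp
  have gb: "\<And>m. m < n0 \<Longrightarrow> kless k (fst (g m)) \<beta>" using b unfolding F_def by simp
  have "\<forall>f \<in> I0_rep k \<delta>. lessI0 k g f \<longrightarrow>
     (\<exists>h \<in> I0_rep k \<beta>. lessI0 k g h \<and> lessI0 k h f)"
  proof (intro ballI impI)
    fix f assume f: "f \<in> I0_rep k \<delta>" and gf: "lessI0 k g f"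
    then obtain n1 where n1: "\<forall>m<n1. g m = f m" "lexKQ k (g n1) (f n1)"
      unfolding lessI0_def by blast
    have fd: "\<And>m. kless k (fst (f m)) \<delta>" using f unfolding I0_rep_def by blast
    have "n1 < n0"
    proof (rule ccontr)
      assume "\<not> n1 < n0"
      then consider "n0 < n1" | "n0 = n1" by linarith
      then show False
      proof cases
        case 1 then have "g n0 = f n0" using n1 by blast
        then show False using n0 fd[of n0] by simp
      next
        case 2
        then have "kless k (fst (g n0)) (fst (f n0)) \<or> fst (g n0) = fst (f n0)"
          using n1(2) unfolding lexKQ_def by blast
        then show False using n0 fd[of n0] kless_trans by metis
      qed
    qed
    obtain a q where aq: "g n1 = (a, q)" by (cases "g n1")
    obtain b r where br: "f n1 = (b, r)" by (cases "f n1")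
    have ab: "kless k a b \<or> (a = b \<and> q < r)" using n1(2) aq br unfolding lexKQ_def by simp
    define c where "c = (if a = b then (a, (q + r) / 2) else (a, q + 1))"
    define h where "h = (\<lambda>m. if m < n1 then g m else if m = n1 then c else (kzero k, 0))"
    have "{n. fst (h n) \<noteq> kzero k} \<subseteq> {..n1}" unfolding h_def by auto
    then have hI0: "h \<in> I0 k" unfolding I0_def using finite_subset by blast
    have ab_: "kless k a \<beta>" using gb[OF \<open>n1 < n0\<close>] aq by simp
    have "\<forall>m. kless k (fst (h m)) \<beta>"
    proof
      fix m show "kless k (fst (h m)) \<beta>"
        using gb \<open>n1 < n0\<close> zb ab_ unfolding h_def c_def by auto
    qed
    then have hb: "h \<in> I0_rep k \<beta>" using hI0 unfolding I0_rep_def by blast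
    have "lexKQ k (g n1) (h n1)" unfolding h_def c_def lexKQ_def using aq ab by auto
    then have gh: "lessI0 k g h" unfolding lessI0_def h_def by auto
    have "lexKQ k (h n1) (f n1)" unfolding h_def c_def lexKQ_def using br ab by auto
    then have hf: "lessI0 k h f" unfolding lessI0_def using n1(1) unfolding h_def
      by (metis less_irrefl)
    show "\<exists>h \<in> I0_rep k \<beta>. lessI0 k g h \<and> lessI0 k h f" using hb gh hf by blast
  qed
  then show ?thesis using b by blast
qed

end

theorem mainTheorem11:
  fixes k :: "'k rel" and i \<delta> :: 'k and \<nu> :: "'k elt"
  assumes card: "card_order k"
    and uncountable: "(natLeq, k) \<in> ordLess"
    and regular: "regularCard k"
    and kappa_less_kappa: "\<forall>\<alpha>. (card_of (Func (underS k \<alpha>) (UNIV :: 'k set)), k) \<in> ordLeq"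
    and omega_pow: "\<forall>\<alpha>. (card_of (Func (UNIV :: nat set) (underS k \<alpha>)), k) \<in> ordLess"
    and lim: "klimit k \<delta>"
    and nu: "\<nu> \<in> Iset k i" "\<nu> \<notin> Irep k i \<delta>"
  shows "\<exists>\<beta>. kless k \<beta> \<delta> \<and>
           (\<forall>\<sigma> \<in> Irep k i \<delta>. (\<nu>, \<sigma>) \<in> Iless k i \<longrightarrow>
              (\<exists>\<sigma>' \<in> Irep k (kzero k) \<beta>. (\<sigma>', \<sigma>) \<in> Iless k i \<and> (\<nu>, \<sigma>') \<in> Iless k i))"
proof -
  interpret kord k using card by unfold_locales
  have Ii: "Inv i" and I0: "Inv (kzero k)" using Inv_all by blast+
  have c1: "\<forall>x \<in> Iset k i. fst x \<in> I0 k" using Ii unfolding Inv_def by blast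
  have c3: "\<forall>x y. (x,y) \<in> Iless k i \<longrightarrow> x \<in> Iset k i \<and> y \<in> Iset k i \<and>
        (fst x \<noteq> fst y \<longrightarrow> lessI0 k (fst x) (fst y))" using Ii unfolding Inv_def by blast
  have c4: "\<forall>x \<in> Iset k i. \<forall>f \<in> I0 k. (lessI0 k f (fst x) \<longrightarrow> ((f, []), x) \<in> Iless k i) \<and>
        (lessI0 k (fst x) f \<longrightarrow> (x, (f, [])) \<in> Iless k i)" using Ii unfolding Inv_def by blast
  have c5: "\<forall>\<alpha>. Irep k i \<alpha> = {x \<in> Iset k i. fst x \<in> I0_rep k \<alpha>}" using Ii unfolding Inv_def by blast
  have z2: "\<forall>f \<in> I0 k. (f, []) \<in> Iset k (kzero k)" using I0 unfolding Inv_def by blast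
  have z5: "\<forall>\<alpha>. Irep k (kzero k) \<alpha> = {x \<in> Iset k (kzero k). fst x \<in> I0_rep k \<alpha>}"
    using I0 unfolding Inv_def by blast
  have g1: "fst \<nu> \<in> I0 k" using c1 nu(1) by blast
  have g2: "fst \<nu> \<notin> I0_rep k \<delta>" using c5 nu by blast
  obtain \<beta> where b: "kless k \<beta> \<delta>" "\<forall>f \<in> I0_rep k \<delta>. lessI0 k (fst \<nu>) f \<longrightarrow>
     (\<exists>h \<in> I0_rep k \<beta>. lessI0 k (fst \<nu>) h \<and> lessI0 k h f)"
    using I0_between[OF lim g1 g2] by blast
  have "\<forall>\<sigma> \<in> Irep k i \<delta>. (\<nu>, \<sigma>) \<in> Iless k i \<longrightarrow>
              (\<exists>\<sigma>' \<in> Irep k (kzero k) \<beta>. (\<sigma>', \<sigma>) \<in> Iless k i \<and> (\<nu>, \<sigma>') \<in> Iless k i)"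
  proof (intro ballI impI)
    fix \<sigma> assume s: "\<sigma> \<in> Irep k i \<delta>" and ns: "(\<nu>, \<sigma>) \<in> Iless k i"
    have sI: "\<sigma> \<in> Iset k i" "fst \<sigma> \<in> I0_rep k \<delta>" using s c5 by auto
    have "fst \<nu> \<noteq> fst \<sigma>" using sI(2) g2 by auto
    then have lt: "lessI0 k (fst \<nu>) (fst \<sigma>)" using c3 ns by blast
    then obtain h where h: "h \<in> I0_rep k \<beta>" "lessI0 k (fst \<nu>) h" "lessI0 k h (fst \<sigma>)"
      using b(2) sI(2) by blast
    have hI: "h \<in> I0 k" using h(1) unfolding I0_rep_def by blast
    have "(h, []) \<in> Irep k (kzero k) \<beta>" using z5 z2 hI h(1) by auto
    moreover have "((h, []), \<sigma>) \<in> Iless k i" using c4 sI(1) hI h(3) by blast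
    moreover have "(\<nu>, (h, [])) \<in> Iless k i" using c4 nu(1) hI h(2) by blast
    ultimately show "\<exists>\<sigma>' \<in> Irep k (kzero k) \<beta>. (\<sigma>', \<sigma>) \<in> Iless k i \<and> (\<nu>, \<sigma>') \<in> Iless k i"
      by blast
  qed
  then show ?thesis using b(1) by blast
qed

end
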